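(* Assume $b>1$. For every $1\le i\le b$ and every positive integer $n$, $$p\,d_i(n)>\sum_{k=0}^\infty y_i\bigl(n-k(p-1)\bigr).$$
   Context: Let $q=p^b$ with $p$ prime. Let $y\in\mathbb{Z}_p$ be written $y=\sum_{i=1}^b p^{i-1}y_i$ with $y_i=\sum_{j\ge0}y_{i,j}q^j$, $0\le y_{i,j}<p$, and assume no $y_i$ is a non-negative integer. For $n\ge1$, $d_i(n)=p^{i-1}q^w$ where $w\ge0$ is the unique integer with $\sum_{j=0}^{w-1}y_{i,j}<n\le\sum_{j=0}^{w}y_{i,j}$. For $m\in\mathbb{Z}$, $y_i(m)=\sum_{n=1}^m d_i(n)$, which is $0$ for $m\le0$ (so the sum is finite). *)

theory Defs
  imports Complex_Main "HOL-Computational_Algebra.Primes"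
begin

text \<open>The p-adic integer y is represented by its digit array:
  ydig i j = y_{i,j}, the j-th base-q digit of y_i (each in [0,p)).
  Here q = p^b.\<close>

definition dfun :: "nat \<Rightarrow> nat \<Rightarrow> (nat \<Rightarrow> nat \<Rightarrow> nat) \<Rightarrow> nat \<Rightarrow> nat \<Rightarrow> nat" where
  "dfun p b ydig i n =
     p ^ (i - 1) * (p ^ b) ^ (THE w. (\<Sum>j<w. ydig i j) < n \<and> n \<le> (\<Sum>j\<le>w. ydig i j))"

definition yfun :: "nat \<Rightarrow> nat \<Rightarrow> (nat \<Rightarrow> nat \<Rightarrow> nat) \<Rightarrow> nat \<Rightarrow> int \<Rightarrow> nat" where
  "yfun p b ydig i m = (\<Sum>n\<in>{1..nat m}. dfun p b ydig i n)"

end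

theory Submission
  imports Defs
begin

definition Wf :: "(nat \<Rightarrow> nat) \<Rightarrow> nat \<Rightarrow> nat" where
  "Wf a n = (THE w. (\<Sum>j<w. a j) < n \<and> n \<le> (\<Sum>j\<le>w. a j))"

lemma psum_mono: "w \<le> v \<Longrightarrow> (\<Sum>j<w. (a::nat\<Rightarrow>nat) j) \<le> (\<Sum>j<v. a j)"
  by (rule sum_mono2) auto

lemma psum_Suc: "(\<Sum>j\<le>w. (a::nat\<Rightarrow>nat) j) = (\<Sum>j<w. a j) + a w"
  by (simp add: lessThan_Suc_atMost[symmetric])

lemma unb:
  assumes "\<not> (\<exists>N. \<forall>j\<ge>N. (a::nat\<Rightarrow>nat) j = 0)"
  shows "\<exists>w. n \<le> (\<Sum>j<w. a j)"
proof (induction n)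
  case 0 show ?case by auto
next
  case (Suc n)
  then obtain w where w: "n \<le> (\<Sum>j<w. a j)" by auto
  from assms obtain j where j: "j \<ge> w" "a j \<noteq> 0" by auto
  have "(\<Sum>j<w. a j) \<le> (\<Sum>j<j. a j)" using psum_mono j(1) by blast
  moreover have "(\<Sum>j'<Suc j. a j') = (\<Sum>j'<j. a j') + a j" by simp
  ultimately have "Suc n \<le> (\<Sum>j'<Suc j. a j')" using w j(2) by linarith
  then show ?case by blast
qed

lemma W_unique:
  assumes "(\<Sum>j<w. (a::nat\<Rightarrow>nat) j) < n" "n \<le> (\<Sum>j\<le>w. a j)"
  shows "Wf a n = w"
  unfolding Wf_def
proof (rule the_equality)
  show "(\<Sum>j<w. a j) < n \<and> n \<le> (\<Sum>j\<le>w. a j)" using assms by simp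
  fix v assume v: "(\<Sum>j<v. a j) < n \<and> n \<le> (\<Sum>j\<le>v. a j)"
  show "v = w"
  proof (rule ccontr)
    assume "v \<noteq> w" then have "v < w \<or> w < v" by auto
    then show False
    proof
      assume "v < w"
      then have "(\<Sum>j\<le>v. a j) \<le> (\<Sum>j<w. a j)"
        using psum_mono[of "Suc v" w a] by (simp add: lessThan_Suc_atMost)
      with v assms show False by linarith
    next
      assume "w < v"
      then have "(\<Sum>j\<le>w. a j) \<le> (\<Sum>j<v. a j)"
        using psum_mono[of "Suc w" v a] by (simp add: lessThan_Suc_atMost)
      with v assms show False by linarith
    qed
  qed
qed

lemma W_spec:
  assumes "\<not> (\<exists>N. \<forall>j\<ge>N. (a::nat\<Rightarrow>nat) j = 0)" "n \<ge> 1"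
  shows "(\<Sum>j<Wf a n. a j) < n \<and> n \<le> (\<Sum>j\<le>Wf a n. a j)"
proof -
  obtain w0 where w0: "n \<le> (\<Sum>j<w0. a j)" using unb[OF assms(1)] by blast
  have ex: "n \<le> (\<Sum>j\<le>w0. a j)" using w0 psum_Suc[of a w0] by linarith
  define w where "w = (LEAST w. n \<le> (\<Sum>j\<le>w. a j))"
  have 1: "n \<le> (\<Sum>j\<le>w. a j)" unfolding w_def by (rule LeastI[of "\<lambda>w. n \<le> (\<Sum>j\<le>w. a j)", OF ex])
  have 2: "(\<Sum>j<w. a j) < n"
  proof (cases w)
    case 0 then show ?thesis using assms by simp
  next
    case (Suc v)
    have "v < (LEAST w. n \<le> (\<Sum>j\<le>w. a j))" using Suc w_def by simp
    then have "\<not> n \<le> (\<Sum>j\<le>v. a j)" by (rule not_less_Least)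
    then show ?thesis using Suc by (simp add: lessThan_Suc_atMost)
  qed
  from W_unique[OF 2 1] 1 2 show ?thesis by simp
qed

lemma W_mono:
  assumes "\<not> (\<exists>N. \<forall>j\<ge>N. (a::nat\<Rightarrow>nat) j = 0)" "1 \<le> m" "m \<le> n"
  shows "Wf a m \<le> Wf a n"
proof (rule ccontr)
  assume "\<not> Wf a m \<le> Wf a n"
  then have "Suc (Wf a n) \<le> Wf a m" by simp
  then have "(\<Sum>j\<le>Wf a n. a j) \<le> (\<Sum>j<Wf a m. a j)"
    using psum_mono[of "Suc (Wf a n)" "Wf a m" a] by (simp add: lessThan_Suc_atMost)
  moreover have "(\<Sum>j<Wf a m. a j) < m" using W_spec[OF assms(1,2)] by simp
  moreover have "n \<le> (\<Sum>j\<le>Wf a n. a j)" using W_spec[OF assms(1)] assms(2,3) by simp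
  ultimately show False using assms(3) by linarith
qed

lemma W_strict:
  assumes "\<not> (\<exists>N. \<forall>j\<ge>N. (a::nat\<Rightarrow>nat) j = 0)" "1 \<le> m" "m + (p - 1) = n"
    "\<And>j. a j < p"
  shows "Wf a m < Wf a n"
proof -
  have le: "Wf a m \<le> Wf a n" using W_mono[OF assms(1,2)] assms(3) by simp
  show ?thesis
  proof (rule ccontr)
    assume "\<not> ?thesis"
    with le have eq: "Wf a m = Wf a n" by simp
    have "(\<Sum>j<Wf a n. a j) < m" using W_spec[OF assms(1,2)] eq by simp
    moreover have "n \<le> (\<Sum>j\<le>Wf a n. a j)" using W_spec[OF assms(1)] assms(2,3) by simp
    moreover have "(\<Sum>j\<le>Wf a n. a j) = (\<Sum>j<Wf a n. a j) + a (Wf a n)" by (rule psum_Suc)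
    moreover have "a (Wf a n) < p" by (rule assms(4))
    ultimately show False using assms(3) by linarith
  qed
qed

lemma Y_split:
  assumes "k \<le> (a::nat\<Rightarrow>nat) w"
  shows "(\<Sum>t\<in>{1..(\<Sum>j<w. a j) + k}. (q::nat) ^ Wf a t)
       = (\<Sum>t\<in>{1..(\<Sum>j<w. a j)}. q ^ Wf a t) + k * q ^ w"
proof -
  let ?P = "\<Sum>j<w. a j"
  have "(\<Sum>t\<in>{1..?P + k}. q ^ Wf a t) = (\<Sum>t\<in>{1..?P}. q ^ Wf a t) + (\<Sum>t\<in>{?P+1..?P + k}. q ^ Wf a t)"
    by (rule sum.ub_add_nat) simp
  also have "(\<Sum>t\<in>{?P+1..?P + k}. q ^ Wf a t) = (\<Sum>t\<in>{?P+1..?P + k}. q ^ w)"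
  proof (rule sum.cong)
    fix t assume t: "t \<in> {?P+1..?P + k}"
    have "Wf a t = w"
      by (rule W_unique) (use t assms psum_Suc[of a w] in auto)
    then show "q ^ Wf a t = q ^ w" by simp
  qed simp
  also have "\<dots> = k * q ^ w" by simp
  finally show ?thesis .
qed

lemma S_bound:
  assumes "\<And>j. (a::nat\<Rightarrow>nat) j \<le> p - 1" "(q::nat) \<ge> 1"
  shows "(q - 1) * (\<Sum>t\<in>{1..(\<Sum>j<w. a j)}. q ^ Wf a t) + (p - 1) \<le> (p - 1) * q ^ w"
proof (induction w)
  case 0 then show ?case by simp
next
  case (Suc w)
  let ?S = "\<Sum>t\<in>{1..(\<Sum>j<w. a j)}. q ^ Wf a t"
  have e: "(\<Sum>t\<in>{1..(\<Sum>j<Suc w. a j)}. q ^ Wf a t) = ?S + a w * q ^ w"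
    using Y_split[of "a w" a w q] by simp
  have m: "(q - 1) * (a w * q ^ w) \<le> (q - 1) * ((p - 1) * q ^ w)"
    using assms(1)[of w] by (intro mult_le_mono2 mult_le_mono1)
  have "(q - 1) * (?S + a w * q ^ w) + (p - 1) = ((q - 1) * ?S + (p - 1)) + (q - 1) * (a w * q ^ w)"
    by (simp add: algebra_simps)
  also have "\<dots> \<le> (p - 1) * q ^ w + (q - 1) * ((p - 1) * q ^ w)"
    using Suc.IH m by linarith
  also have "\<dots> = (p - 1) * q ^ Suc w"
  proof -
    have h: "((p - 1) * q ^ w) + (q - 1) * ((p - 1) * q ^ w) = q * ((p - 1) * q ^ w)"
      using assms(2) by (cases q) auto
    then show ?thesis by (metis mult.left_commute power_Suc)
  qed
  finally show ?case using e by simp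
qed

theorem lemma6p6:
  fixes p b :: nat and ydig :: "nat \<Rightarrow> nat \<Rightarrow> nat"
  assumes "prime p"
    and "b > 1"
    and "\<And>i j. 1 \<le> i \<Longrightarrow> i \<le> b \<Longrightarrow> ydig i j < p"
    and "\<And>i. 1 \<le> i \<Longrightarrow> i \<le> b \<Longrightarrow> \<not> (\<exists>N. \<forall>j\<ge>N. ydig i j = 0)"
    and "1 \<le> i" and "i \<le> b" and "(n::nat) \<ge> 1"
  shows "real (p * dfun p b ydig i n)
           > (\<Sum>k. real (yfun p b ydig i (int n - int k * (int p - 1))))"
proof -
  have p2: "p \<ge> 2" using assms(1) by (rule prime_ge_2_nat)
  define a where "a = ydig i"
  have ha: "\<And>j. a j < p" unfolding a_def using assms(3,5,6) by blast
  have ha': "\<And>j. a j \<le> p - 1" using ha by (metis Suc_pred' less_Suc_eq_le not_gr_zero not_less0)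
  have hu: "\<not> (\<exists>N. \<forall>j\<ge>N. a j = 0)" unfolding a_def using assms(4,5,6) by blast
  define c where "c = p ^ (i - 1)"
  define q where "q = p ^ b"
  have cpos: "c \<ge> 1" unfolding c_def using p2 by simp
  have q2p: "q \<ge> 2 * p"
  proof -
    have "p ^ 2 \<le> p ^ b" using assms(2) p2 by (intro power_increasing) auto
    moreover have "2 * p \<le> p ^ 2" using p2 by (simp add: power2_eq_square)
    ultimately show ?thesis unfolding q_def by linarith
  qed
  have dfun_eq: "\<And>t. dfun p b ydig i t = c * q ^ Wf a t"
    by (simp add: dfun_def Wf_def c_def q_def a_def)
  define Y where "Y t = (\<Sum>s\<in>{1..t}. q ^ Wf a s)" for t
  have yfun_eq: "\<And>t. yfun p b ydig i (int t) = c * Y t"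
    by (simp add: yfun_def dfun_eq sum_distrib_left Y_def)
  have yfun_np: "\<And>m. m \<le> 0 \<Longrightarrow> yfun p b ydig i m = 0"
    by (simp add: yfun_def)
  define f where "f m k = real (yfun p b ydig i (m - int k * (int p - 1)))" for m k
  define T where "T m = suminf (f m)" for m
  have kle: "\<And>k::nat. int k \<le> int k * (int p - 1)"
    using p2 by (simp add: mult_le_cancel_left1)
  have summ: "\<And>m. summable (f m)"
  proof -
    fix m
    show "summable (f m)"
    proof (rule summable_finite[of "{..nat m}"])
      fix k assume "k \<notin> {..nat m}"
      then have "int k > m" by auto
      then have "m - int k * (int p - 1) \<le> 0" using kle[of k] by linarith
      then show "f m k = 0" unfolding f_def using yfun_np by simp
    qed simp
  qed
  have T_zero: "\<And>m. m \<le> 0 \<Longrightarrow> T m = 0"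
  proof -
    fix m :: int assume m: "m \<le> 0"
    have "\<And>k. f m k = 0"
    proof -
      fix k
      have "m - int k * (int p - 1) \<le> 0" using m kle[of k] by linarith
      then show "f m k = 0" unfolding f_def using yfun_np by simp
    qed
    then have "f m = (\<lambda>k. 0)" by (rule ext)
    then show "T m = 0" unfolding T_def by simp
  qed
  have T_split: "\<And>m. T m = f m 0 + T (m - (int p - 1))"
  proof -
    fix m
    have "(\<Sum>k. f m (Suc k)) = suminf (f m) - f m 0" by (rule suminf_split_head[OF summ])
    moreover have "(\<lambda>k. f m (Suc k)) = f (m - (int p - 1))"
      by (rule ext) (simp add: f_def algebra_simps)
    ultimately show "T m = f m 0 + T (m - (int p - 1))" unfolding T_def by simp
  qed
  have Sb: "\<And>w. (q - 1) * Y (\<Sum>j<w. a j) + (p - 1) \<le> (p - 1) * q ^ w"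
    unfolding Y_def using S_bound[of a p q] ha' q2p p2 by simp
  have main: "\<And>n. n \<ge> 1 \<Longrightarrow> T (int n) < real p * real c * real q ^ Wf a n"
  proof -
    fix n :: nat
    show "n \<ge> 1 \<Longrightarrow> T (int n) < real p * real c * real q ^ Wf a n"
    proof (induction n rule: less_induct)
      case (less n)
      define W where "W = Wf a n"
      define P where "P = (\<Sum>j<W. a j)"
      have sp: "P < n" "n \<le> P + a W" using W_spec[OF hu less.prems] psum_Suc[of a W]
        unfolding W_def P_def by auto
      define k where "k = n - P"
      have kp: "k \<le> p - 1" "k \<le> a W" using sp ha'[of W] unfolding k_def by auto
      have Yn: "Y n = Y P + k * q ^ W"
        using Y_split[of k a W q] kp sp unfolding Y_def P_def k_def by simp
      have SbW: "(q - 1) * Y P + (p - 1) \<le> (p - 1) * q ^ W" using Sb[of W] unfolding P_def .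
      have f0: "f (int n) 0 = real c * (real (Y P) + real k * real q ^ W)"
        unfolding f_def using yfun_eq[of n] Yn by simp
      have R1: "(real q - 1) * real (Y P) + (real p - 1) \<le> (real p - 1) * real q ^ W"
      proof -
        have "real ((q - 1) * Y P + (p - 1)) \<le> real ((p - 1) * q ^ W)" using SbW by linarith
        then show ?thesis using q2p p2 by (simp add: of_nat_diff)
      qed
      have qge: "real q \<ge> 2 * real p" using q2p by linarith
      have pge: "real p \<ge> 2" using p2 by simp
      have kr: "real k \<le> real p - 1" using kp p2 by (simp add: of_nat_diff)
      have cr: "real c \<ge> 1" using cpos by simp
      have split: "T (int n) = f (int n) 0 + T (int n - (int p - 1))" by (rule T_split)
      show ?case
      proof (cases "n \<le> p - 1")
        case True
        then have "int n - (int p - 1) \<le> 0" using p2 by (simp add: of_nat_diff)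
        then have T0: "T (int n - (int p - 1)) = 0" by (rule T_zero)
        have "(real q - 1) * real (Y P) < (real q - 1) * real q ^ W"
        proof -
          have "(real p - 1) * real q ^ W \<le> (real q - 1) * real q ^ W"
            using qge pge by (intro mult_right_mono) auto
          then show ?thesis using R1 pge by linarith
        qed
        then have SY: "real (Y P) < real q ^ W" using qge pge
          by (smt (verit) mult_less_cancel_left)
        have "real k * real q ^ W \<le> (real p - 1) * real q ^ W"
          using kr by (intro mult_right_mono) auto
        then have "real (Y P) + real k * real q ^ W < real p * real q ^ W"
          using SY left_diff_distrib[of "real p" 1 "real q ^ W"] by linarith
        then have "real c * (real (Y P) + real k * real q ^ W) < real c * (real p * real q ^ W)"
          using cr by (intro mult_strict_left_mono) auto
        then show ?thesis using split T0 f0 unfolding W_def by (simp add: algebra_simps)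
      next
        case False
        define m where "m = n - (p - 1)"
        have m1: "m \<ge> 1" "m < n" "m + (p - 1) = n" using False p2 unfolding m_def by auto
        have im: "int m = int n - (int p - 1)" using m1(3) p2 by linarith
        have IH: "T (int m) < real p * real c * real q ^ Wf a m" using less.IH[OF m1(2) m1(1)] .
        have lt: "Wf a m < W" unfolding W_def using W_strict[OF hu m1(1) m1(3) ha] .
        then obtain V where V: "W = Suc V" using less_imp_Suc_add by blast
        define Q where "Q = real q ^ V"
        have Qpos: "Q \<ge> 0" unfolding Q_def by simp
        have qW: "real q ^ W = real q * Q" unfolding Q_def V by simp
        have "real q ^ Wf a m \<le> Q" unfolding Q_def using lt V qge pge
          by (intro power_increasing) auto
        then have "real p * real c * real q ^ Wf a m \<le> real p * real c * Q"
          using pge cr by (intro mult_left_mono) auto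
        with IH have Tm: "T (int m) < real p * real c * Q" by linarith
        have h1: "(real q - 1) * real (Y P) \<le> (real p - 1) * (real q * Q)" using R1 pge unfolding qW by linarith
        have qq: "2 * real p * real q - real q - real p \<le> real q * real q - real q"
        proof -
          have "real q * (2 * real p) \<le> real q * real q" using qge by (intro mult_left_mono) auto
          then show ?thesis using pge by (simp add: algebra_simps)
        qed
        have h2: "(real q - 1) * (real (Y P) + real p * Q) \<le> (real q - 1) * (real q * Q)"
        proof -
          have "(real q - 1) * (real (Y P) + real p * Q) = (real q - 1) * real (Y P) + (real q - 1) * real p * Q"
            by (simp add: algebra_simps)
          also have "\<dots> \<le> (real p - 1) * (real q * Q) + (real q - 1) * real p * Q" using h1 by linarith
          also have "\<dots> = (2 * real p * real q - real q - real p) * Q" by (simp add: algebra_simps)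
          also have "\<dots> \<le> (real q * real q - real q) * Q" using qq Qpos by (intro mult_right_mono) auto
          also have "\<dots> = (real q - 1) * (real q * Q)" by (simp add: algebra_simps)
          finally show ?thesis .
        qed
        have h3: "real (Y P) + real p * Q \<le> real q * Q"
          using h2 qge pge by (smt (verit) mult_le_cancel_left)
        have "real k * (real q * Q) \<le> (real p - 1) * (real q * Q)"
          using kr qge Qpos by (intro mult_right_mono) auto
        then have h4: "real (Y P) + real k * (real q * Q) + real p * Q \<le> real p * (real q * Q)"
          using h3 by (simp add: algebra_simps)
        have "real c * (real (Y P) + real k * (real q * Q) + real p * Q) \<le> real c * (real p * (real q * Q))"
          using h4 cr by (intro mult_left_mono) auto
        then show ?thesis using split f0 Tm im qW unfolding W_def[symmetric] by (simp add: algebra_simps)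
      qed
    qed
  qed
  have "T (int n) < real p * real c * real q ^ Wf a n" using main assms(7) by blast
  then show ?thesis unfolding T_def f_def using dfun_eq[of n] by simp
qed

end
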